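(* Consider the online asynchronous testing setting with conflict sets described in the context, with test levels $\alpha_j\ge0$ that are $\mathcal{F}^{-\mathcal{X}^j}$-measurable for every $j$. Suppose that for every $t\in\mathcal{H}^0$ and every $u\in[0,1]$, $\mathbb{P}(P_t\le u\mid\mathcal{F}^{-\mathcal{X}^{E_t}})\le u$. Then, for every $t\in\mathbb{N}$, if $\mathrm{FDP}^*(t)\le\alpha$ almost surely, where $$\mathrm{FDP}^*(t)=\frac{\sum_{j\le t,\ j\in\mathcal{H}^0}\alpha_j}{(\sum_{j:\,E_j\le t}R_j)\vee1},$$ then $\mathrm{mFDR}(t)\le\alpha$.
   Context: Hypotheses $H_1,H_2,\dots$ are tested; the test of $H_t$ starts at step $t$, is run at level $\alpha_t$ (and possibly with a candidacy threshold $\lambda_t\in[\alpha_t,1)$), and produces a $p$-value $P_t$. $\mathcal{H}^0$ is the fixed set of indices of true nulls. Test $t$ has a fixed decision time $E_t\ge t$. $R_t=\mathbf{1}\{P_t\le\alpha_t\}$, $C_t=\mathbf{1}\{P_t\le\lambda_t\}$. $\{L_t\}$ is a fixed sequence of nonnegative integer lags with $L_{t+1}\le L_t+1$; the conflict set is $\mathcal{X}^t=\{i\in[t-1]:E_i\ge t\}\cup(\{t-L_t,\dots,t-1\}\cap[t-1])$. $\mathcal{F}^{-\mathcal{X}^t}$ denotes either $\sigma(R_i:i\le t-1,\ i\notin\mathcal{X}^t)$ or $\sigma(R_i,C_i:i\le t-1,\ i\notin\mathcal{X}^t)$. $\mathcal{R}(t)=\{i\in[t]:E_i\le t,\ P_i\le\alpha_i\}$,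 $\mathcal{V}(t)=\mathcal{R}(t)\cap\mathcal{H}^0$, $\mathrm{mFDR}(t)=\mathbb{E}|\mathcal{V}(t)|/\mathbb{E}[|\mathcal{R}(t)|\vee1]$. *)

theory Defs
  imports "HOL-Probability.Probability"
begin

text \<open>Hypotheses are indexed by 1, 2, 3, ...; [t-1] = {1..<t}.\<close>

definition conflict_set :: "(nat \<Rightarrow> nat) \<Rightarrow> (nat \<Rightarrow> nat) \<Rightarrow> nat \<Rightarrow> nat set" where
  "conflict_set E L t = {i \<in> {1..<t}. E i \<ge> t} \<union> ({t - L t..<t} \<inter> {1..<t})"

text \<open>The filtration F^{-X^t}: generated by R_i (and, if withC, also C_i) for i in [t-1] minus X^t.
  Since R_i, C_i are indicators, the generated sigma algebra is the one generated by the events.\<close>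
definition Fminus ::
  "'a measure \<Rightarrow> bool \<Rightarrow> (nat \<Rightarrow> 'a \<Rightarrow> real) \<Rightarrow> (nat \<Rightarrow> 'a \<Rightarrow> real) \<Rightarrow> (nat \<Rightarrow> 'a \<Rightarrow> real)
    \<Rightarrow> (nat \<Rightarrow> nat) \<Rightarrow> (nat \<Rightarrow> nat) \<Rightarrow> nat \<Rightarrow> 'a measure" where
  "Fminus M withC P alpha lambda E L t =
     sigma (space M)
       ({{x \<in> space M. P i x \<le> alpha i x} | i. i \<in> {1..<t} - conflict_set E L t}
        \<union> (if withC then {{x \<in> space M. P i x \<le> lambda i x} | i. i \<in> {1..<t} - conflict_set E L t}
           else {}))"

definition rej_set :: "(nat \<Rightarrow> 'a \<Rightarrow> real) \<Rightarrow> (nat \<Rightarrow> 'a \<Rightarrow> real) \<Rightarrow> (nat \<Rightarrow> nat) \<Rightarrow> nat \<Rightarrow> 'a \<Rightarrow> nat set" where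
  "rej_set P alpha E t x = {i \<in> {1..t}. E i \<le> t \<and> P i x \<le> alpha i x}"

definition false_rej_set :: "nat set \<Rightarrow> (nat \<Rightarrow> 'a \<Rightarrow> real) \<Rightarrow> (nat \<Rightarrow> 'a \<Rightarrow> real) \<Rightarrow> (nat \<Rightarrow> nat) \<Rightarrow> nat \<Rightarrow> 'a \<Rightarrow> nat set" where
  "false_rej_set H0 P alpha E t x = rej_set P alpha E t x \<inter> H0"

definition mFDR :: "'a measure \<Rightarrow> nat set \<Rightarrow> (nat \<Rightarrow> 'a \<Rightarrow> real) \<Rightarrow> (nat \<Rightarrow> 'a \<Rightarrow> real) \<Rightarrow> (nat \<Rightarrow> nat) \<Rightarrow> nat \<Rightarrow> real" where
  "mFDR M H0 P alpha E t =
     (\<integral>x. real (card (false_rej_set H0 P alpha E t x)) \<partial>M) /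
     (\<integral>x. max (real (card (rej_set P alpha E t x))) 1 \<partial>M)"

definition Rind :: "(nat \<Rightarrow> 'a \<Rightarrow> real) \<Rightarrow> (nat \<Rightarrow> 'a \<Rightarrow> real) \<Rightarrow> nat \<Rightarrow> 'a \<Rightarrow> real" where
  "Rind P alpha j x = (if P j x \<le> alpha j x then 1 else 0)"

definition FDP_star :: "nat set \<Rightarrow> (nat \<Rightarrow> 'a \<Rightarrow> real) \<Rightarrow> (nat \<Rightarrow> 'a \<Rightarrow> real) \<Rightarrow> (nat \<Rightarrow> nat) \<Rightarrow> nat \<Rightarrow> 'a \<Rightarrow> real" where
  "FDP_star H0 P alpha E t x =
     (\<Sum>j \<in> {1..t} \<inter> H0. alpha j x) /
     max (\<Sum>j \<in> {j. 1 \<le> j \<and> E j \<le> t}. Rind P alpha j x) 1"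

end

theory Submission
  imports Defs
begin

lemma key_ineq:
  fixes Q al :: "'a \<Rightarrow> real"
  assumes prob: "prob_space M" and sub: "subalgebra M G"
   and Qm[measurable]: "Q \<in> borel_measurable M"
   and am[measurable]: "al \<in> borel_measurable G"
   and anon: "\<And>x. x\<in>space M \<Longrightarrow> al x \<ge> 0"
   and aint: "integrable M al"
   and su: "\<And>u. 0 \<le> u \<Longrightarrow> u \<le> 1 \<Longrightarrow>
      AE x in M. real_cond_exp M G (indicator {y\<in>space M. Q y \<le> u}) x \<le> u"
  shows "(\<integral>x. (if Q x \<le> al x then 1 else 0::real) \<partial>M) \<le> (\<integral>x. al x \<partial>M)"
proof -
  interpret prob_space M by (rule prob)
  interpret F: finite_measure_subalgebra M G
    by unfold_locales (rule sub)
  have amM[measurable]: "al \<in> borel_measurable M" by (rule measurable_from_subalg[OF sub am])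
  have step: "(\<integral>x. (if Q x \<le> al x then 1 else 0::real) \<partial>M) \<le> (\<integral>x. al x \<partial>M) + 1 / real n"
    if n1: "n \<ge> 1" for n :: nat
  proof -
    define k0 where "k0 x = nat \<lceil>real n * al x\<rceil>" for x
    define f where "f k x = (if al x \<le> 1 \<and> k0 x = k then 1 else 0::real)" for k x
    define g where "g k = (indicator {y\<in>space M. Q y \<le> real k / real n} :: 'a \<Rightarrow> real)" for k
    define h where "h x = (if al x > 1 then 1 else 0::real)" for x
    have fG[measurable]: "f k \<in> borel_measurable G" for k unfolding f_def k0_def by measurable
    have fM[measurable]: "f k \<in> borel_measurable M" for k unfolding f_def k0_def by measurable
    have gM[measurable]: "g k \<in> borel_measurable M" for k unfolding g_def by measurable
    have hM[measurable]: "h \<in> borel_measurable M" unfolding h_def by measurable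
    have f01: "0 \<le> f k x \<and> f k x \<le> 1" for k x unfolding f_def by auto
    have g01: "0 \<le> g k x \<and> g k x \<le> 1" for k x unfolding g_def by (auto simp: indicator_def)
    have h01: "0 \<le> h x \<and> h x \<le> 1" for x unfolding h_def by auto
    have sumf: "(\<Sum>k\<in>{0..n}. f k x * c k) = (if al x \<le> 1 then c (k0 x) else 0)"
      if "x \<in> space M" for x c
    proof (cases "al x \<le> 1")
      case True
      have "real n * al x \<le> real n" using True n1 by (simp add: mult_left_le)
      then have "k0 x \<le> n" unfolding k0_def by (simp add: ceiling_le_iff nat_le_iff)
      have "(\<Sum>k\<in>{0..n}. f k x * c k) = (\<Sum>k\<in>{0..n}. if k = k0 x then c k else 0)"
        by (rule sum.cong) (auto simp: f_def True)
      then show ?thesis using True \<open>k0 x \<le> n\<close> by simp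
    next
      case False
      then show ?thesis unfolding f_def by simp
    qed
    have k0prop: "al x \<le> real (k0 x) / real n \<and> real (k0 x) / real n < al x + 1 / real n"
      if "x \<in> space M" for x
    proof -
      have a0: "al x \<ge> 0" using anon that by simp
      have "real n * al x \<ge> 0" using a0 by simp
      then have c0: "\<lceil>real n * al x\<rceil> \<ge> 0" by (simp add: ceiling_le_iff)
      have e: "real (k0 x) = real_of_int \<lceil>real n * al x\<rceil>" unfolding k0_def using c0 by simp
      have n0: "real n > 0" using n1 by simp
      have "real n * al x \<le> real (k0 x)" using e le_of_int_ceiling by simp
      moreover have "real (k0 x) < real n * al x + 1" using e ceiling_correct[of "real n * al x"] by linarith
      ultimately show ?thesis using n0 by (simp add: field_simps)
    qed
    have p1: "(if Q x \<le> al x then 1 else 0) \<le> (\<Sum>k\<in>{0..n}. f k x * g k x) + h x"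
      if x: "x \<in> space M" for x
    proof (cases "al x \<le> 1")
      case True
      then show ?thesis using sumf[OF x, of "\<lambda>k. g k x"] k0prop[OF x] x h01[of x]
        by (auto simp: g_def indicator_def)
    next
      case False
      then show ?thesis using sumf[OF x, of "\<lambda>k. g k x"] unfolding h_def by auto
    qed
    have p2: "(\<Sum>k\<in>{0..n}. f k x * (real k / real n)) + h x \<le> al x + 1 / real n"
      if x: "x \<in> space M" for x
    proof (cases "al x \<le> 1")
      case True
      then show ?thesis using sumf[OF x, of "\<lambda>k. real k / real n"] k0prop[OF x] unfolding h_def by auto
    next
      case False
      have "(\<Sum>k\<in>{0..n}. f k x * (real k / real n)) = 0" using sumf[OF x, of "\<lambda>k. real k / real n"] False by simp
      moreover have "h x = 1" using False by (simp add: h_def)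
      moreover have "0 \<le> 1 / real n" by simp
      ultimately show ?thesis using False by linarith
    qed
    have intb: "integrable M u" if "u \<in> borel_measurable M" "\<And>x. x \<in> space M \<Longrightarrow> \<bar>u x\<bar> \<le> B" for u :: "'a \<Rightarrow> real" and B :: real
    proof (rule integrable_const_bound)
      show "AE x in M. norm (u x) \<le> B" using that(2) by (intro AE_I2) simp
    qed (rule that(1))
    have ifg: "integrable M (\<lambda>x. f k x * g k x)" for k
      by (rule intb[of _ 1]) (use f01 g01 in \<open>auto simp: abs_mult intro: mult_le_one\<close>)
    have ifc: "integrable M (\<lambda>x. f k x * c)" for k c
      by (rule intb[of _ "\<bar>c\<bar>"]) (use f01 in \<open>auto simp: abs_mult intro: mult_left_le_one_le\<close>)
    have ih: "integrable M h" by (rule intb[of _ 1]) (use h01 in auto)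
    have i1: "integrable M (\<lambda>x. \<Sum>k\<in>{0..n}. f k x * (real k / real n))"
      using ifc by (intro Bochner_Integration.integrable_sum[where f="\<lambda>k x. f k x * (real k / real n)"]) blast
    have i2: "integrable M (\<lambda>x. (\<Sum>k\<in>{0..n}. f k x * (real k / real n)) + h x)"
      by (rule Bochner_Integration.integrable_add[OF i1 ih])
    have iR: "integrable M (\<lambda>x. if Q x \<le> al x then 1 else 0::real)" by (rule intb[of _ 1]) auto
    have "(\<integral>x. (if Q x \<le> al x then 1 else 0::real) \<partial>M) \<le> (\<integral>x. (\<Sum>k\<in>{0..n}. f k x * g k x) + h x \<partial>M)"
      by (rule integral_mono) (use iR ifg ih p1 in auto)
    also have "\<dots> = (\<Sum>k\<in>{0..n}. (\<integral>x. f k x * g k x \<partial>M)) + (\<integral>x. h x \<partial>M)"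
      using ifg ih by (simp add: integral_sum)
    also have "\<dots> \<le> (\<Sum>k\<in>{0..n}. (\<integral>x. f k x * (real k / real n) \<partial>M)) + (\<integral>x. h x \<partial>M)"
    proof -
      have "(\<integral>x. f k x * g k x \<partial>M) \<le> (\<integral>x. f k x * (real k / real n) \<partial>M)" if k: "k \<in> {0..n}" for k
      proof -
        have e: "(\<integral>x. f k x * g k x \<partial>M) = (\<integral>x. f k x * real_cond_exp M G (g k) x \<partial>M)"
          using F.real_cond_exp_intg(2)[OF ifg fG gM] by simp
        have u01: "0 \<le> real k / real n" "real k / real n \<le> 1" using k n1 by auto
        have ae: "AE x in M. real_cond_exp M G (g k) x \<le> real k / real n"
          using su[OF u01] unfolding g_def by simp
        have "(\<integral>x. f k x * real_cond_exp M G (g k) x \<partial>M) \<le> (\<integral>x. f k x * (real k / real n) \<partial>M)"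
        proof (rule integral_mono_AE)
          show "integrable M (\<lambda>x. f k x * real_cond_exp M G (g k) x)"
            using F.real_cond_exp_intg(1)[OF ifg fG gM] .
          show "integrable M (\<lambda>x. f k x * (real k / real n))" by (rule ifc)
          show "AE x in M. f k x * real_cond_exp M G (g k) x \<le> f k x * (real k / real n)"
            using ae by eventually_elim (use f01 in \<open>metis mult_left_mono\<close>)
        qed
        then show ?thesis using e by simp
      qed
      then show ?thesis by (intro add_mono sum_mono) auto
    qed
    also have "\<dots> = (\<integral>x. (\<Sum>k\<in>{0..n}. f k x * (real k / real n)) + h x \<partial>M)"
    proof -
      have "(\<integral>x. (\<Sum>k\<in>{0..n}. f k x * (real k / real n)) + h x \<partial>M)
         = (\<integral>x. (\<Sum>k\<in>{0..n}. f k x * (real k / real n)) \<partial>M) + (\<integral>x. h x \<partial>M)"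
        by (rule Bochner_Integration.integral_add[OF i1 ih])
      also have "(\<integral>x. (\<Sum>k\<in>{0..n}. f k x * (real k / real n)) \<partial>M)
         = (\<Sum>k\<in>{0..n}. (\<integral>x. f k x * (real k / real n) \<partial>M))"
        using ifc by (intro Bochner_Integration.integral_sum[where f="\<lambda>k x. f k x * (real k / real n)"]) blast
      finally show ?thesis by simp
    qed
    also have "\<dots> \<le> (\<integral>x. al x + 1 / real n \<partial>M)"
      by (rule integral_mono) (use i2 aint p2 in auto)
    also have "\<dots> = (\<integral>x. al x \<partial>M) + 1 / real n"
      using aint by (simp add: prob_space)
    finally show ?thesis .
  qed
  show ?thesis
  proof (rule ccontr)
    assume "\<not> ?thesis"
    then have "0 < (\<integral>x. (if Q x \<le> al x then 1 else 0::real) \<partial>M) - (\<integral>x. al x \<partial>M)" by simp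
    then obtain n where "inverse (real (Suc n)) < (\<integral>x. (if Q x \<le> al x then 1 else 0::real) \<partial>M) - (\<integral>x. al x \<partial>M)"
      using reals_Archimedean by blast
    then show False using step[of "Suc n"] by (simp add: field_simps)
  qed
qed


lemma lag_mono:
  assumes "\<And>j. L (Suc j) \<le> L j + 1" and "k \<le> k'"
  shows "k - L k \<le> k' - L k'"
  using assms(2)
proof (induction k' rule: dec_induct)
  case base then show ?case by simp
next
  case (step m)
  have "L (Suc m) \<le> L m + 1" by (rule assms(1))
  then show ?case using step.IH by linarith
qed

lemma gen_mono:
  assumes "\<And>j. L (Suc j) \<le> L j + 1" and "j \<le> t'"
    and "i \<in> {1..<j} - conflict_set E L j"
  shows "i \<in> {1..<t'} - conflict_set E L t'"
proof -
  have "j - L j \<le> t' - L t'" using lag_mono[of L, OF assms(1) assms(2)] .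
  then show ?thesis using assms(2,3) unfolding conflict_set_def by auto
qed

lemma Fminus_mono:
  assumes "\<And>j. L (Suc j) \<le> L j + 1" and "j \<le> t'"
  shows "sets (Fminus M withC P alpha lambda E L j) \<subseteq> sets (Fminus M withC P alpha lambda E L t')"
proof -
  define Gen where "Gen j = ({{x \<in> space M. P i x \<le> alpha i x} | i. i \<in> {1..<j} - conflict_set E L j}
        \<union> (if withC then {{x \<in> space M. P i x \<le> lambda i x} | i. i \<in> {1..<j} - conflict_set E L j}
           else {}))" for j
  have pw: "Gen k \<subseteq> Pow (space M)" for k unfolding Gen_def by auto
  have AB: "{1..<j} - conflict_set E L j \<subseteq> {1..<t'} - conflict_set E L t'"
    using gen_mono[of L, OF assms] by blast
  have s1: "{{x \<in> space M. P i x \<le> alpha i x} | i. i \<in> {1..<j} - conflict_set E L j}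
     \<subseteq> {{x \<in> space M. P i x \<le> alpha i x} | i. i \<in> {1..<t'} - conflict_set E L t'}"
    using AB by blast
  have s2: "{{x \<in> space M. P i x \<le> lambda i x} | i. i \<in> {1..<j} - conflict_set E L j}
     \<subseteq> {{x \<in> space M. P i x \<le> lambda i x} | i. i \<in> {1..<t'} - conflict_set E L t'}"
    using AB by blast
  have sb: "Gen j \<subseteq> Gen t'"
  proof (cases withC)
    case True
    show ?thesis unfolding Gen_def if_P[OF True] by (rule Un_mono[OF s1 s2])
  next
    case False
    show ?thesis unfolding Gen_def if_not_P[OF False] Un_empty_right by (rule s1)
  qed
  have e: "sets (Fminus M withC P alpha lambda E L k) = sigma_sets (space M) (Gen k)" for k
    unfolding Fminus_def Gen_def[symmetric] sets_measure_of_conv using pw by simp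
  show ?thesis unfolding e by (rule sigma_sets_mono'[OF sb])
qed

lemma Fminus_space: "space (Fminus M withC P alpha lambda E L j) = space M"
  unfolding Fminus_def by (simp add: space_measure_of_conv)

lemma Fminus_sub:
  assumes "\<And>i. 1 \<le> i \<Longrightarrow> i < j \<Longrightarrow> alpha i \<in> borel_measurable M"
    and "\<And>i. 1 \<le> i \<Longrightarrow> P i \<in> borel_measurable M"
    and "\<And>i. withC \<Longrightarrow> 1 \<le> i \<Longrightarrow> lambda i \<in> borel_measurable M"
  shows "sets (Fminus M withC P alpha lambda E L j) \<subseteq> sets M"
proof -
  have g: "A \<in> sets M" if "A \<in> ({{x \<in> space M. P i x \<le> alpha i x} | i. i \<in> {1..<j} - conflict_set E L j}
        \<union> (if withC then {{x \<in> space M. P i x \<le> lambda i x} | i. i \<in> {1..<j} - conflict_set E L j}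
           else {}))" for A
  proof -
    from that obtain i where i: "i \<in> {1..<j}" and
      A: "A = {x \<in> space M. P i x \<le> alpha i x} \<or> (withC \<and> A = {x \<in> space M. P i x \<le> lambda i x})"
      by (auto split: if_splits)
    have [measurable]: "P i \<in> borel_measurable M" "alpha i \<in> borel_measurable M" using assms i by auto
    show ?thesis
    proof (cases "A = {x \<in> space M. P i x \<le> alpha i x}")
      case True then show ?thesis by simp
    next
      case False
      then have wc: withC and A2: "A = {x \<in> space M. P i x \<le> lambda i x}" using A by auto
      have [measurable]: "lambda i \<in> borel_measurable M" using assms(3)[OF wc] i by auto
      show ?thesis unfolding A2 by measurable
    qed
  qed
  define Gen where "Gen = ({{x \<in> space M. P i x \<le> alpha i x} | i. i \<in> {1..<j} - conflict_set E L j}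
        \<union> (if withC then {{x \<in> space M. P i x \<le> lambda i x} | i. i \<in> {1..<j} - conflict_set E L j}
           else {}))"
  have pw: "Gen \<subseteq> Pow (space M)" unfolding Gen_def by auto
  have gs: "Gen \<subseteq> sets M" unfolding Gen_def by (rule subsetI, rule g)
  have e: "sets (Fminus M withC P alpha lambda E L j) = sigma_sets (space M) Gen"
    unfolding Fminus_def Gen_def[symmetric] sets_measure_of_conv using pw by simp
  show ?thesis unfolding e by (rule sets.sigma_sets_subset[OF gs])
qed

lemma sum_Rind: "finite A \<Longrightarrow> (\<Sum>j\<in>A. Rind P alpha j x) = real (card {j\<in>A. P j x \<le> alpha j x})"
  unfolding Rind_def by (simp add: sum.If_cases Int_def)

theorem proposition1:
  fixes M :: "'a measure"
    and P alpha lambda :: "nat \<Rightarrow> 'a \<Rightarrow> real"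
    and E L :: "nat \<Rightarrow> nat"
    and H0 :: "nat set"
    and withC :: bool
    and a :: real
    and t :: nat
  assumes prob: "prob_space M"
    and H0_idx: "H0 \<subseteq> {1..}"
    and E_ge: "\<And>j. j \<ge> 1 \<Longrightarrow> E j \<ge> j"
    and L_lag: "\<And>j. L (Suc j) \<le> L j + 1"
    and P_meas: "\<And>j. j \<ge> 1 \<Longrightarrow> P j \<in> borel_measurable M"
    and lambda_meas: "\<And>j. withC \<Longrightarrow> j \<ge> 1 \<Longrightarrow> lambda j \<in> borel_measurable M"
    and lambda_range: "\<And>j x. withC \<Longrightarrow> j \<ge> 1 \<Longrightarrow> x \<in> space M \<Longrightarrow>
                          alpha j x \<le> lambda j x \<and> lambda j x < 1"
    and alpha_nonneg: "\<And>j x. j \<ge> 1 \<Longrightarrow> x \<in> space M \<Longrightarrow> alpha j x \<ge> 0"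
    and alpha_meas: "\<And>j. j \<ge> 1 \<Longrightarrow>
                        alpha j \<in> borel_measurable (Fminus M withC P alpha lambda E L j)"
    and superunif: "\<And>s u. s \<in> H0 \<Longrightarrow> 0 \<le> u \<Longrightarrow> u \<le> 1 \<Longrightarrow>
         AE x in M. real_cond_exp M (Fminus M withC P alpha lambda E L (E s))
                      (indicator {y \<in> space M. P s y \<le> u}) x \<le> u"
    and FDP_bound: "AE x in M. FDP_star H0 P alpha E t x \<le> a"
  shows "mFDR M H0 P alpha E t \<le> a"
proof -
  interpret prob_space M by (rule prob)
  let ?F = "Fminus M withC P alpha lambda E L"
  have amM: "alpha j \<in> borel_measurable M" if "j \<ge> 1" for j
    using that
  proof (induction j rule: less_induct)
    case (less j)
    have "sets (?F j) \<subseteq> sets M"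
      by (rule Fminus_sub) (use less P_meas lambda_meas in auto)
    then have "subalgebra M (?F j)" unfolding subalgebra_def by (simp add: Fminus_space)
    then show ?case using measurable_from_subalg alpha_meas[OF less.prems] by blast
  qed
  have subF: "subalgebra M (?F j)" for j
  proof -
    have "sets (?F j) \<subseteq> sets M"
      by (rule Fminus_sub) (use amM P_meas lambda_meas in auto)
    then show ?thesis unfolding subalgebra_def by (simp add: Fminus_space)
  qed
  have amE: "alpha s \<in> borel_measurable (?F (E s))" if "s \<ge> 1" for s
  proof -
    have "subalgebra (?F (E s)) (?F s)"
      unfolding subalgebra_def using Fminus_mono[of L, OF L_lag E_ge[OF that]] by (simp add: Fminus_space)
    then show ?thesis using measurable_from_subalg alpha_meas[OF that] by blast
  qed
  have Rm: "Rind P alpha j \<in> borel_measurable M" if "j \<ge> 1" for j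
  proof -
    have [measurable]: "P j \<in> borel_measurable M" "alpha j \<in> borel_measurable M"
      using that P_meas amM by auto
    show ?thesis unfolding Rind_def by measurable
  qed
  have intb: "integrable M u" if "u \<in> borel_measurable M" "AE x in M. \<bar>u x\<bar> \<le> B"
    for u :: "'a \<Rightarrow> real" and B :: real
  proof (rule integrable_const_bound)
    show "AE x in M. norm (u x) \<le> B" using that(2) by simp
  qed (rule that(1))
  have iR: "integrable M (Rind P alpha j)" if "j \<ge> 1" for j
    by (rule intb[of _ 1]) (use Rm[OF that] in \<open>auto simp: Rind_def\<close>)
  define T where "T = {j. 1 \<le> j \<and> E j \<le> t}"
  define S where "S = T \<inter> H0"
  define N where "N = {1..t} \<inter> H0"
  have TT: "T \<subseteq> {1..t}"
  proof
    fix j assume "j \<in> T"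
    then have "1 \<le> j" "E j \<le> t" by (auto simp: T_def)
    then show "j \<in> {1..t}" using E_ge[of j] by simp
  qed
  have fT: "finite T" using TT finite_subset by blast
  have fS: "finite S" using fT unfolding S_def by simp
  have fN: "finite N" unfolding N_def by simp
  have SN: "S \<subseteq> N" using TT unfolding S_def N_def by auto
  have T1: "j \<ge> 1" if "j \<in> T" for j using that unfolding T_def by simp
  have N1: "j \<ge> 1" if "j \<in> N" for j using that unfolding N_def by simp
  define D where "D x = (\<Sum>j\<in>T. Rind P alpha j x)" for x
  define num where "num x = (\<Sum>j\<in>N. alpha j x)" for x
  have rejT: "rej_set P alpha E t x = {j\<in>T. P j x \<le> alpha j x}" for x
    using TT unfolding rej_set_def T_def by auto
  have cardR: "real (card (rej_set P alpha E t x)) = D x" for x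
    unfolding D_def rejT by (rule sum_Rind[OF fT, symmetric])
  have cardV: "real (card (false_rej_set H0 P alpha E t x)) = (\<Sum>j\<in>S. Rind P alpha j x)" for x
  proof -
    have "false_rej_set H0 P alpha E t x = {j\<in>S. P j x \<le> alpha j x}"
      unfolding false_rej_set_def rejT S_def by auto
    then show ?thesis by (simp add: sum_Rind[OF fS])
  qed
  have Dm: "D \<in> borel_measurable M" unfolding D_def
    using Rm T1 by (intro borel_measurable_sum) auto
  have Dle: "D x \<le> real t" for x
  proof -
    have "card (rej_set P alpha E t x) \<le> card {1..t}"
      by (rule card_mono) (auto simp: rej_set_def)
    then show ?thesis using cardR[of x] by simp
  qed
  have D0: "D x \<ge> 0" for x using cardR[of x] by simp
  have FDP: "AE x in M. num x \<le> a * max (D x) 1"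
    using FDP_bound
  proof eventually_elim
    case (elim x)
    have "FDP_star H0 P alpha E t x = num x / max (D x) 1"
      unfolding FDP_star_def num_def D_def T_def N_def by simp
    then show ?case using elim by (simp add: pos_divide_le_eq)
  qed
  have aint: "integrable M (alpha s)" if s: "s \<in> N" for s
  proof (rule intb[of _ "\<bar>a\<bar> * (real t + 1)"])
    show "alpha s \<in> borel_measurable M" using amM N1 s by blast
    show "AE x in M. \<bar>alpha s x\<bar> \<le> \<bar>a\<bar> * (real t + 1)"
      using FDP
    proof (rule AE_mp)
      show "AE x in M. num x \<le> a * max (D x) 1 \<longrightarrow> \<bar>alpha s x\<bar> \<le> \<bar>a\<bar> * (real t + 1)"
      proof (rule AE_I2, rule impI)
        fix x assume x: "x \<in> space M" and le: "num x \<le> a * max (D x) 1"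
        have nn: "\<And>j. j \<in> N \<Longrightarrow> alpha j x \<ge> 0" using alpha_nonneg N1 x by blast
        have "alpha s x \<le> num x" unfolding num_def
          by (rule member_le_sum) (use s nn fN in auto)
        moreover have "a * max (D x) 1 \<le> \<bar>a\<bar> * max (D x) 1"
          by (rule mult_right_mono) auto
        moreover have "\<bar>a\<bar> * max (D x) 1 \<le> \<bar>a\<bar> * (real t + 1)"
          by (rule mult_left_mono) (use Dle[of x] in auto)
        ultimately show "\<bar>alpha s x\<bar> \<le> \<bar>a\<bar> * (real t + 1)"
          using nn[OF s] le by linarith
      qed
    qed
  qed
  have keyS: "(\<integral>x. Rind P alpha j x \<partial>M) \<le> (\<integral>x. alpha j x \<partial>M)" if j: "j \<in> S" for j
  proof -
    have j1: "j \<ge> 1" and jH: "j \<in> H0" and jN: "j \<in> N" using j SN T1 unfolding S_def by auto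
    show ?thesis unfolding Rind_def
    proof (rule key_ineq[OF prob subF])
      show "P j \<in> borel_measurable M" using P_meas j1 by blast
      show "alpha j \<in> borel_measurable (?F (E j))" by (rule amE[OF j1])
      show "\<And>x. x \<in> space M \<Longrightarrow> 0 \<le> alpha j x" using alpha_nonneg j1 by blast
      show "integrable M (alpha j)" by (rule aint[OF jN])
      show "\<And>u. 0 \<le> u \<Longrightarrow> u \<le> 1 \<Longrightarrow>
        AE x in M. real_cond_exp M (?F (E j)) (indicator {y \<in> space M. P j y \<le> u}) x \<le> u"
        using superunif[OF jH] by blast
    qed
  qed
  have inum: "integrable M num" unfolding num_def
    using aint by (intro Bochner_Integration.integrable_sum[where f=alpha]) blast
  have iaD: "integrable M (\<lambda>x. a * max (D x) 1)"
  proof (rule intb[of _ "\<bar>a\<bar> * (real t + 1)"])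
    show "(\<lambda>x. a * max (D x) 1) \<in> borel_measurable M" using Dm by measurable
    show "AE x in M. \<bar>a * max (D x) 1\<bar> \<le> \<bar>a\<bar> * (real t + 1)"
    proof (rule AE_I2)
      fix x
      have "max (D x) 1 \<le> real t + 1" "0 \<le> max (D x) 1" using Dle[of x] by auto
      then show "\<bar>a * max (D x) 1\<bar> \<le> \<bar>a\<bar> * (real t + 1)"
        by (simp add: abs_mult mult_left_mono)
    qed
  qed
  have iDen: "integrable M (\<lambda>x. max (D x) 1)"
  proof (rule intb[of _ "real t + 1"])
    show "(\<lambda>x. max (D x) 1) \<in> borel_measurable M" using Dm by measurable
    show "AE x in M. \<bar>max (D x) 1\<bar> \<le> real t + 1"
    proof (rule AE_I2)
      fix x show "\<bar>max (D x) 1\<bar> \<le> real t + 1" using Dle[of x] D0[of x] by simp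
    qed
  qed
  have "(\<integral>x. real (card (false_rej_set H0 P alpha E t x)) \<partial>M) = (\<integral>x. (\<Sum>j\<in>S. Rind P alpha j x) \<partial>M)"
    using cardV by simp
  also have "\<dots> = (\<Sum>j\<in>S. (\<integral>x. Rind P alpha j x \<partial>M))"
    using iR T1 unfolding S_def by (intro Bochner_Integration.integral_sum[where f="Rind P alpha"]) auto
  also have "\<dots> \<le> (\<Sum>j\<in>S. (\<integral>x. alpha j x \<partial>M))"
    using keyS by (rule sum_mono)
  also have "\<dots> \<le> (\<Sum>j\<in>N. (\<integral>x. alpha j x \<partial>M))"
  proof (rule sum_mono2[OF fN SN])
    fix b assume "b \<in> N - S"
    then have "b \<ge> 1" using N1 by auto
    then show "0 \<le> (\<integral>x. alpha b x \<partial>M)"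
      using alpha_nonneg by (intro Bochner_Integration.integral_nonneg) auto
  qed
  also have "\<dots> = (\<integral>x. num x \<partial>M)"
    unfolding num_def using aint by (intro Bochner_Integration.integral_sum[where f=alpha, symmetric]) blast
  also have "\<dots> \<le> (\<integral>x. a * max (D x) 1 \<partial>M)"
    by (rule integral_mono_AE[OF inum iaD FDP])
  also have "\<dots> = a * (\<integral>x. max (real (card (rej_set P alpha E t x))) 1 \<partial>M)"
    by (simp add: cardR)
  finally have main: "(\<integral>x. real (card (false_rej_set H0 P alpha E t x)) \<partial>M)
      \<le> a * (\<integral>x. max (real (card (rej_set P alpha E t x))) 1 \<partial>M)" .
  have "(1::real) = (\<integral>x. 1 \<partial>M)" by (simp add: prob_space)
  also have "\<dots> \<le> (\<integral>x. max (D x) 1 \<partial>M)"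
    by (rule integral_mono[OF _ iDen]) auto
  also have "\<dots> = (\<integral>x. max (real (card (rej_set P alpha E t x))) 1 \<partial>M)"
    by (simp add: cardR)
  finally have den: "1 \<le> (\<integral>x. max (real (card (rej_set P alpha E t x))) 1 \<partial>M)" .
  show ?thesis
    unfolding mFDR_def using main den by (simp add: pos_divide_le_eq)
qed

end
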